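(* Let $d\ge1$, $k\ge d+2$ and $\alpha\in(0,1)$. Then there exist absolutely continuous probability measures $\mu_1,\dots,\mu_k$ on $\mathbb R^d$ such that there is no convex set $C\subset\mathbb R^d$ with $\mu_1(C)=\dots=\mu_k(C)=\alpha$. *)

theory Defs
  imports "HOL-Probability.Probability"
begin

end

theory Submission
  imports Defs
begin
definition cube :: "real^'n \<Rightarrow> (real^'n) set" where
 "cube v = cbox (v - (\<chi> i. 1)) (v + (\<chi> i. 1))"
lemma cube_mem: "x \<in> cube v \<longleftrightarrow> (\<forall>i. \<bar>x$i - v$i\<bar> \<le> 1)"
  unfolding cube_def mem_box_cart by (simp add: abs_le_iff algebra_simps; blast)
lemma cube_sets: "cube v \<in> sets lebesgue"
  unfolding cube_def by simp
lemma cube_pos: "emeasure lebesgue (cube v) \<noteq> 0"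
  unfolding cube_def
  apply (simp add: emeasure_lborel_cbox_eq Basis_vec_def inner_axis)
proof -
  have "prod (\<lambda>b. (2 * (\<chi> i. 1)) \<bullet> (b::real^'n)) (\<Union>x. {axis x 1}) > 0"
    by (rule prod_pos) (auto simp: inner_axis)
  then show "ennreal (prod (\<lambda>b. (2 * (\<chi> i. 1)) \<bullet> (b::real^'n)) (\<Union>x. {axis x 1})) \<noteq> 0"
    by (simp add: ennreal_eq_0_iff not_le)
qed
lemma cube_fin: "emeasure lebesgue (cube v) \<noteq> \<infinity>"
  unfolding cube_def
  using emeasure_lborel_cbox_finite by (simp add: less_top)

lemma cube_dev:
  fixes a y v :: "real^'n"
  assumes "y \<in> cube v" "\<And>i. \<bar>a$i\<bar> \<le> m"
  shows "\<bar>a \<bullet> y - a \<bullet> v\<bar> \<le> real CARD('n) * m"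
proof -
  have "a \<bullet> y - a \<bullet> v = (\<Sum>i\<in>UNIV. a$i * (y$i - v$i))"
    by (simp add: inner_vec_def sum_subtractf right_diff_distrib)
  also have "\<bar>\<dots>\<bar> \<le> (\<Sum>i\<in>UNIV. \<bar>a$i * (y$i - v$i)\<bar>)" by (rule sum_abs)
  also have "\<dots> \<le> (\<Sum>i\<in>(UNIV::'n set). m)"
  proof (rule sum_mono)
    fix i
    have "\<bar>y$i - v$i\<bar> \<le> 1" using assms(1) by (simp add: cube_mem)
    then have "\<bar>a$i\<bar> * \<bar>y$i - v$i\<bar> \<le> m * 1"
      using assms(2)[of i] by (intro mult_mono) auto
    then show "\<bar>a$i * (y$i - v$i)\<bar> \<le> m" by (simp add: abs_mult)
  qed
  also have "\<dots> = real CARD('n) * m" by simp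
  finally show ?thesis .
qed

lemma key:
  fixes a x q0 :: "real^'n" and q :: "'n \<Rightarrow> real^'n"
  defines "D \<equiv> real CARD('n)"
  defines "N \<equiv> 4 * D * D"
  assumes a: "a \<noteq> 0" and x: "x \<in> cube 0"
    and q: "\<And>t. q t \<in> cube (N *\<^sub>R axis t 1)" and q0: "q0 \<in> cube (- (N *\<^sub>R (\<chi> i. 1)))"
    and h: "\<And>t. a \<bullet> x \<le> a \<bullet> q t" and h0: "a \<bullet> x \<le> a \<bullet> q0"
  shows False
proof -
  define m where "m = Max (range (\<lambda>i. \<bar>a$i\<bar>))"
  have fin: "finite (range (\<lambda>i. \<bar>a$i\<bar>))" by simp
  have am: "\<bar>a$i\<bar> \<le> m" for i unfolding m_def by (rule Max_ge[OF fin]) auto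
  have "m \<in> range (\<lambda>i. \<bar>a$i\<bar>)" unfolding m_def by (rule Max_in[OF fin]) auto
  then obtain i0 where i0: "\<bar>a$i0\<bar> = m" by auto
  have D1: "D \<ge> 1" unfolding D_def
    using card_ge_0_finite[of "UNIV::'n set"] by simp
  have "m > 0"
  proof (rule ccontr)
    assume "\<not> m > 0"
    then have "\<And>i. a$i = 0" using am by (metis abs_ge_zero abs_le_zero_iff le_less_trans not_le)
    then have "a = 0" by (simp add: vec_eq_iff)
    with a show False by simp
  qed
  have dx: "\<bar>a \<bullet> x\<bar> \<le> D * m" using cube_dev[OF x am] D_def by simp
  have lo: "2 * D * a$t + m \<ge> 0" for t
  proof -
    have "\<bar>a \<bullet> q t - a \<bullet> (N *\<^sub>R axis t 1)\<bar> \<le> D * m" using cube_dev[OF q am] D_def by simp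
    moreover have "a \<bullet> (N *\<^sub>R axis t 1) = N * a$t" by (simp add: inner_axis)
    ultimately have "N * a$t + 2 * D * m \<ge> 0" using h[of t] dx by linarith
    then have "2 * D * (2 * D * a$t + m) \<ge> 0" unfolding N_def by (simp add: algebra_simps)
    then show ?thesis using D1 by (simp add: zero_le_mult_iff)
  qed
  define S where "S = (\<Sum>i\<in>UNIV. a$i)"
  have hi: "2 * D * S \<le> m"
  proof -
    have "\<bar>a \<bullet> q0 - a \<bullet> (- (N *\<^sub>R (\<chi> i. 1)))\<bar> \<le> D * m" using cube_dev[OF q0 am] D_def by simp
    moreover have "a \<bullet> (- (N *\<^sub>R (\<chi> i. 1))) = - N * S"
      by (simp add: inner_vec_def S_def sum_distrib_left mult.commute)
    ultimately have "- N * S + 2 * D * m \<ge> 0" using h0 dx by linarith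
    then have "2 * D * (m - 2 * D * S) \<ge> 0" unfolding N_def by (simp add: algebra_simps)
    then show ?thesis using D1 by (simp add: zero_le_mult_iff)
  qed
  have "2 * D * S = 2 * D * a$i0 + (\<Sum>i\<in>UNIV - {i0}. 2 * D * a$i)"
    unfolding S_def sum_distrib_left by (simp add: sum.remove)
  also have "(\<Sum>i\<in>UNIV - {i0}. 2 * D * a$i) \<ge> (\<Sum>i\<in>UNIV - {i0}. - m)"
    by (rule sum_mono) (smt (verit) lo)
  moreover have "(\<Sum>i\<in>(UNIV::'n set) - {i0}. - m) = - (D - 1) * m"
    by (simp add: D_def card_Diff_singleton algebra_simps)
  ultimately have f1: "2 * D * S \<ge> 2 * D * a$i0 - (D - 1) * m" by linarith
  have f2: "a$i0 = m \<or> a$i0 = - m" using i0 by auto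
  have f3: "2 * D * a$i0 + m \<ge> 0" by (rule lo)
  have f4: "D * m \<ge> m" using D1 \<open>m > 0\<close> by simp
  have f5: "2 * D * m - (D - 1) * m - m = D * m" by (simp add: algebra_simps)
  have f6: "D * m > 0" using D1 \<open>m > 0\<close> by simp
  show False using f2
  proof
    assume e: "a$i0 = m"
    have "2 * D * a$i0 = 2 * D * m" by (simp add: e)
    then show False using f1 f5 f6 hi by linarith
  next
    assume e: "a$i0 = - m"
    have "2 * D * a$i0 = - (2 * D * m)" by (simp add: e)
    then show False using f3 f4 \<open>m > 0\<close> by linarith
  qed
qed

lemma unif_props:
  fixes v :: "real^'n"
  shows "prob_space (uniform_measure lebesgue (cube v)) \<and> sets (uniform_measure lebesgue (cube v)) = sets lebesgue
        \<and> absolutely_continuous lebesgue (uniform_measure lebesgue (cube v))"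
proof (intro conjI)
  show "prob_space (uniform_measure lebesgue (cube v))"
    by (rule prob_space_uniform_measure[OF cube_pos cube_fin])
  show "sets (uniform_measure lebesgue (cube v)) = sets lebesgue" by simp
  show "absolutely_continuous lebesgue (uniform_measure lebesgue (cube v))"
    unfolding uniform_measure_def using cube_sets[of v]
    by (intro absolutely_continuousI_density borel_measurable_divide_ennreal borel_measurable_indicator measurable_const) auto
qed

lemma unif_meas:
  fixes v :: "real^'n"
  assumes "measure (uniform_measure lebesgue (cube v)) C = \<alpha>" "0 < \<alpha>" "\<alpha> < 1"
  shows "C \<inter> cube v \<noteq> {}" "\<not> cube v \<subseteq> C"
proof -
  have C: "C \<in> sets lebesgue"
    using assms measure_notin_sets[of C "uniform_measure lebesgue (cube v)"] by force
  have eq: "\<alpha> = measure lebesgue (cube v \<inter> C) / measure lebesgue (cube v)"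
    using assms(1) measure_uniform_measure[OF cube_pos cube_fin C] by simp
  show "C \<inter> cube v \<noteq> {}"
    using eq assms(2) by (auto simp: Int_commute)
  have "measure lebesgue (cube v) \<noteq> 0"
    using cube_pos[of v] cube_fin[of v] by (simp add: emeasure_eq_ennreal_measure)
  then show "\<not> cube v \<subseteq> C"
    using eq assms(3) by (auto simp: Int_absorb2)
qed

theorem mainTheorem8:
  fixes k :: nat and \<alpha> :: real
  assumes "k \<ge> CARD('n::finite) + 2"
    and "0 < \<alpha>" and "\<alpha> < 1"
  shows "\<exists>\<mu> :: nat \<Rightarrow> (real ^ 'n) measure.
           (\<forall>i<k. prob_space (\<mu> i) \<and> sets (\<mu> i) = sets lebesgue
                  \<and> absolutely_continuous lebesgue (\<mu> i)) \<and>
           \<not> (\<exists>C :: (real ^ 'n) set. convex C \<and> (\<forall>i<k. measure (\<mu> i) C = \<alpha>))"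
proof -
  define d where "d = CARD('n)"
  define N :: real where "N = 4 * real d * real d"
  obtain h :: "nat \<Rightarrow> 'n" where h: "bij_betw h {0..<d} UNIV"
    using ex_bij_betw_nat_finite[of "UNIV::'n set"] unfolding d_def by auto
  define ctr :: "nat \<Rightarrow> real^'n" where
    "ctr i = (if i < d then N *\<^sub>R axis (h i) 1 else if i = d then - (N *\<^sub>R (\<chi> i. 1)) else 0)" for i
  define \<mu> where "\<mu> i = uniform_measure lebesgue (cube (ctr i))" for i
  have "\<not> (\<exists>C :: (real ^ 'n) set. convex C \<and> (\<forall>i<k. measure (\<mu> i) C = \<alpha>))"
  proof
    assume "\<exists>C :: (real ^ 'n) set. convex C \<and> (\<forall>i<k. measure (\<mu> i) C = \<alpha>)"
    then obtain C :: "(real^'n) set" where C: "convex C" "\<And>i. i < k \<Longrightarrow> measure (\<mu> i) C = \<alpha>"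
      by blast
    have ne: "C \<inter> cube (ctr i) \<noteq> {}" if "i < k" for i
      using unif_meas(1)[OF C(2)[OF that, unfolded \<mu>_def] assms(2,3)] .
    have "\<not> cube (ctr (d+1)) \<subseteq> C"
      using unif_meas(2)[OF C(2)[unfolded \<mu>_def] assms(2,3)] assms(1) d_def by simp
    then obtain x where x: "x \<in> cube 0" "x \<notin> C" by (auto simp: ctr_def)
    have "convex ((\<lambda>y. y - x) ` C)"
      using C(1) by (simp add: convex_translation_subtract_eq)
    moreover have "0 \<notin> (\<lambda>y. y - x) ` C" using x by auto
    ultimately obtain a :: "real^'n" where a: "a \<noteq> 0" "\<forall>z\<in>(\<lambda>y. y - x) ` C. 0 \<le> inner a z"
      using separating_hyperplane_set_0 by blast
    have sep: "a \<bullet> x \<le> a \<bullet> y" if "y \<in> C" for y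
      using a(2) that by (auto simp: inner_diff_right)
    define q where "q t = (SOME y. y \<in> C \<inter> cube (N *\<^sub>R axis t 1))" for t
    have q: "q t \<in> C \<inter> cube (N *\<^sub>R axis t 1)" for t
    proof -
      define i where "i = inv_into {0..<d} h t"
      have t: "t \<in> h ` {0..<d}" using h by (simp add: bij_betw_def)
      have i: "i < d" "h i = t"
        using inv_into_into[OF t] f_inv_into_f[OF t] unfolding i_def by auto
      then have "i < k" using assms(1) d_def by simp
      then have "C \<inter> cube (N *\<^sub>R axis t 1) \<noteq> {}" using ne[of i] i by (simp add: ctr_def)
      then show ?thesis unfolding q_def by (meson ex_in_conv someI_ex)
    qed
    obtain q0 where q0: "q0 \<in> C \<inter> cube (- (N *\<^sub>R (\<chi> i. 1)))"
      using ne[of d] assms(1) d_def by (auto simp: ctr_def)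
    show False
      using key[OF a(1) x(1), of q q0] q q0 sep unfolding N_def d_def by auto
  qed
  moreover have "\<forall>i<k. prob_space (\<mu> i) \<and> sets (\<mu> i) = sets lebesgue
                  \<and> absolutely_continuous lebesgue (\<mu> i)"
    unfolding \<mu>_def using unif_props by blast
  ultimately show ?thesis by blast
qed
end
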